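(* Let $G=(V,E)$ be a finite simple graph with directed edge set $\vec E$ (each undirected edge yields two opposite directed edges; $o(e)$, $t(e)$ are origin and terminus, $\bar e$ the reverse edge, $[e]$ the undirected edge). Let $(r_i)_{i\in V}$ be positive integers and $u_e\in\mathbb{C}^{r_{t(e)}\times r_{o(e)}}$ for $e\in\vec E$. Define $$Z_G(\boldsymbol u)=\prod_{\mathfrak p\in\mathfrak P_G}\det(I-\pi(\mathfrak p))^{-1},\qquad \pi(\mathfrak p)=u_{e_k}\cdots u_{e_1}\ \text{for }\mathfrak p=(e_1,\dots,e_k),$$ where $\mathfrak P_G$ is the set of prime cycles. Assume $I-u_eu_{\bar e}$ is invertible for every $e$. Then $$Z_G(\boldsymbol u)^{-1}=\det\big(I+\hat{\mathcal D}(\boldsymbol u)-\hat{\mathcal A}(\boldsymbol u)\big)\prod_{[e]\in E}\det(I-u_eu_{\bar e}),$$ where $\hat{\mathcal D}(\boldsymbol u),\hat{\mathcal A}(\boldsymbol u)$ are the operators on $\bigoplus_{i\in V}\mathbb{C}^{r_i}$ $$(\hat{\mathcal D}(\boldsymbol u)g)(i)=\Big(\sum_{e:t(e)=i}(I_{r_i}-u_eu_{\bar e})^{-1}u_eu_{\bar e}\Big)g(i),\qquad(\hat{\mathcal A}(\boldsymbol u)g)(i)=\sum_{e:t(e)=i}(I_{r_i}-u_eu_{\bar e})^{-1}u_e\,g(o(e)),$$ and the product over $[e]\in E$ takes one directed representative per undirected edge.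
   Context: A closed geodesic in $G$ is a sequence $(e_1,\dots,e_k)$ of directed edges with $t(e_l)=o(e_{l+1})$ and $e_{l+1}\ne\bar e_l$ for all $l\in\mathbb{Z}/k\mathbb{Z}$; it is prime if it is not the $m$-fold repetition ($m\ge2$) of a shorter closed geodesic; a prime cycle is a cyclic-permutation equivalence class of prime closed geodesics. The identity is understood as an identity of formal power series in the entries of the $u_e$ (with $Z_G(\boldsymbol u)^{-1}$ equal to $\det(I-\mathcal M)$, where $\mathcal M$ acts on $\bigoplus_{e}\mathbb{C}^{r_{t(e)}}$ by $(\mathcal Mf)(e)=\sum_{e':t(e')=o(e),\,e'\ne\bar e}u_ef(e')$). *)

theory Defs
  imports "Jordan_Normal_Form.Gauss_Jordan_Elimination" "Jordan_Normal_Form.Determinant"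
    "HOL-Combinatorics.Permutations"
begin

(* Determinant of an operator on a finite-dimensional space with a basis indexed
   by the finite set S (Leibniz formula); A x y is the matrix entry (row x, column y). *)
definition det_on :: "'a set \<Rightarrow> ('a \<Rightarrow> 'a \<Rightarrow> complex) \<Rightarrow> complex" where
  "det_on S A = (\<Sum>p | p permutes S. of_int (sign p) * (\<Prod>x\<in>S. A x (p x)))"

(* Directed edges are pairs e = (o(e), t(e)); reverse edge is prod.swap e. *)

(* basis index of  \<Oplus>_{e} C^{r_{t(e)}} *)
definition edge_index :: "('v \<times> 'v) set \<Rightarrow> ('v \<Rightarrow> nat) \<Rightarrow> (('v \<times> 'v) \<times> nat) set" where
  "edge_index E r = {(e, a). e \<in> E \<and> a < r (snd e)}"

(* basis index of  \<Oplus>_{i\<in>V} C^{r_i} *)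
definition vertex_index :: "'v set \<Rightarrow> ('v \<Rightarrow> nat) \<Rightarrow> ('v \<times> nat) set" where
  "vertex_index V r = {(i, a). i \<in> V \<and> a < r i}"

definition edge_op :: "('v \<times> 'v) set \<Rightarrow> ('v \<times> 'v \<Rightarrow> complex mat)
     \<Rightarrow> ('v \<times> 'v) \<times> nat \<Rightarrow> ('v \<times> 'v) \<times> nat \<Rightarrow> complex" where
  "edge_op E u x y = (case x of (e, a) \<Rightarrow> case y of (e', b) \<Rightarrow>
      if e' \<in> E \<and> snd e' = fst e \<and> e' \<noteq> prod.swap e then u e $$ (a, b) else 0)"

(* Z_G(u)^{-1} := det(I - M), as fixed in the context *)
definition zeta_inv :: "('v \<times> 'v) set \<Rightarrow> ('v \<Rightarrow> nat) \<Rightarrow> ('v \<times> 'v \<Rightarrow> complex mat) \<Rightarrow> complex" where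
  "zeta_inv E r u = det_on (edge_index E r) (\<lambda>x y. (if x = y then 1 else 0) - edge_op E u x y)"

definition Winv :: "('v \<Rightarrow> nat) \<Rightarrow> ('v \<times> 'v \<Rightarrow> complex mat) \<Rightarrow> 'v \<times> 'v \<Rightarrow> complex mat" where
  "Winv r u e = the (mat_inverse (1\<^sub>m (r (snd e)) - u e * u (prod.swap e)))"

definition hatD :: "('v \<times> 'v) set \<Rightarrow> ('v \<Rightarrow> nat) \<Rightarrow> ('v \<times> 'v \<Rightarrow> complex mat)
     \<Rightarrow> 'v \<times> nat \<Rightarrow> 'v \<times> nat \<Rightarrow> complex" where
  "hatD E r u x y = (case x of (i, a) \<Rightarrow> case y of (j, b) \<Rightarrow>
      if i = j then (\<Sum>e\<in>{e\<in>E. snd e = i}. (Winv r u e * u e * u (prod.swap e)) $$ (a, b)) else 0)"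

definition hatA :: "('v \<times> 'v) set \<Rightarrow> ('v \<Rightarrow> nat) \<Rightarrow> ('v \<times> 'v \<Rightarrow> complex mat)
     \<Rightarrow> 'v \<times> nat \<Rightarrow> 'v \<times> nat \<Rightarrow> complex" where
  "hatA E r u x y = (case x of (i, a) \<Rightarrow> case y of (j, b) \<Rightarrow>
      (\<Sum>e\<in>{e\<in>E. snd e = i \<and> fst e = j}. (Winv r u e * u e) $$ (a, b)))"

end

theory Submission
  imports Defs
begin


lemma det_on_reindex:
  assumes f: "bij_betw f A B" and fin: "finite A"
  shows "det_on B M = det_on A (\<lambda>x y. M (f x) (f y))"
proof -
  let ?g = "\<lambda>p x. if x \<in> B then f (p (inv_into A f x)) else x"
  have bij: "bij_betw ?g {p. p permutes A} {p. p permutes B}" by (rule bij_betw_permutations[OF f])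
  have "det_on B M = (\<Sum>p\<in>{p. p permutes A}. of_int (sign (?g p)) * (\<Prod> y\<in>B. M y (?g p y)))"
    unfolding det_on_def by (rule sum.reindex_bij_betw[OF bij, symmetric])
  also have "\<dots> = det_on A (\<lambda>x y. M (f x) (f y))" unfolding det_on_def
  proof (rule sum.cong[OF refl])
    fix p assume p: "p \<in> {p. p permutes A}"
    have "permutes_bij_finite p A B f (inv_into A f)"
      by unfold_locales (use p f fin in \<open>auto simp: bij_betw_def\<close>)
    hence sg: "sign (?g p) = sign p" by (rule permutes_bij_finite.sign_p')
    have inj: "inj_on f A" using f by (auto simp: bij_betw_def)
    have "(\<Prod> y\<in>B. M y (?g p y)) = (\<Prod> x\<in>A. M (f x) (?g p (f x)))"
      by (rule prod.reindex_bij_betw[OF f, symmetric])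
    also have "\<dots> = (\<Prod> x\<in>A. M (f x) (f (p x)))"
      by (rule prod.cong[OF refl]) (use f inj in \<open>auto simp: bij_betw_def\<close>)
    finally show "of_int (sign (?g p)) * (\<Prod> y\<in>B. M y (?g p y)) = of_int (sign p) * (\<Prod> x\<in>A. M (f x) (f (p x)))"
      using sg by simp
  qed
  finally show ?thesis .
qed

lemma det_on_mat: "det_on {0..<n} M = det (mat n n (\<lambda>(i,j). M i j))"
  unfolding det_on_def det_def by (auto intro!: sum.cong prod.cong simp: permutes_in_image sign_def)

lemma det_on_cong:
  assumes "\<And>x y. x \<in> S \<Longrightarrow> y \<in> S \<Longrightarrow> M x y = N x y"
  shows "det_on S M = det_on S N"
  unfolding det_on_def using assms by (auto intro!: sum.cong prod.cong simp: permutes_in_image)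

lemma det_on_via:
  assumes h: "bij_betw h {0..<n} S"
  shows "det_on S M = det (mat n n (\<lambda>(i,j). M (h i) (h j)))"
  using det_on_reindex[OF h, of M] det_on_mat[of n] by simp

lemma sum_via:
  assumes h: "bij_betw h {0..<n} S"
  shows "(\<Sum>z\<in>S. f z) = (\<Sum>k=0..<n. f (h k))"
  using sum.reindex_bij_betw[OF h, of f] by simp

lemma det_on_mult:
  assumes fin: "finite S"
  shows "det_on S (\<lambda>x y. \<Sum>z\<in>S. A x z * B z y) = det_on S A * det_on S B"
proof -
  obtain h where h: "bij_betw h {0..<card S} S" using ex_bij_betw_nat_finite[OF fin] by blast
  let ?n = "card S"
  let ?A = "mat ?n ?n (\<lambda>(i,j). A (h i) (h j))"
  let ?B = "mat ?n ?n (\<lambda>(i,j). B (h i) (h j))"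
  have "mat ?n ?n (\<lambda>(i,j). \<Sum>z\<in>S. A (h i) z * B z (h j)) = ?A * ?B"
    by (rule eq_matI) (auto simp: scalar_prod_def sum_via[OF h] atLeast0LessThan)
  thus ?thesis using det_on_via[OF h] det_mult[of ?A ?n ?B] by simp
qed

lemma sylvester_mat:
  fixes A :: "'a :: idom mat"
  assumes A: "A \<in> carrier_mat n m" and B: "B \<in> carrier_mat m n"
  shows "det (1\<^sub>m n - A * B) = det (1\<^sub>m m - B * A)"
proof -
  let ?M = "four_block_mat (1\<^sub>m n) A B (1\<^sub>m m)"
  have M: "?M \<in> carrier_mat (n+m) (n+m)" using A B by auto
  let ?N1 = "four_block_mat (1\<^sub>m n) (-A) (0\<^sub>m m n) (1\<^sub>m m)"
  let ?N2 = "four_block_mat (1\<^sub>m n) (0\<^sub>m n m) (-B) (1\<^sub>m m)"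
  have N1: "?N1 \<in> carrier_mat (n+m) (n+m)" using A B by auto
  have N2: "?N2 \<in> carrier_mat (n+m) (n+m)" using A B by auto
  have e1: "?M * ?N1 = four_block_mat (1\<^sub>m n) (0\<^sub>m n m) B (1\<^sub>m m - B * A)"
    apply (subst mult_four_block_mat[OF one_carrier_mat A B one_carrier_mat one_carrier_mat uminus_carrier_mat[OF A] zero_carrier_mat one_carrier_mat])
    apply (rule cong_four_block_mat)
    using A B by (auto intro!: eq_matI)
  have e2: "?M * ?N2 = four_block_mat (1\<^sub>m n - A * B) A (0\<^sub>m m n) (1\<^sub>m m)"
    apply (subst mult_four_block_mat[OF one_carrier_mat A B one_carrier_mat one_carrier_mat zero_carrier_mat uminus_carrier_mat[OF B] one_carrier_mat])
    apply (rule cong_four_block_mat)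
    using A B by (auto intro!: eq_matI)
  have d1: "det ?N1 = 1"
    by (subst det_four_block_mat_lower_left_zero[of _ n _ m]) (use A in auto)
  have d2: "det ?N2 = 1"
    by (subst det_four_block_mat_upper_right_zero[of _ n _ m]) (use B in auto)
  have "det ?M = det (1\<^sub>m m - B * A)"
    using det_mult[OF M N1] d1 e1
    by (simp, subst (asm) det_four_block_mat_upper_right_zero[of _ n _ m]) (use A B in auto)
  moreover have "det ?M = det (1\<^sub>m n - A * B)"
    using det_mult[OF M N2] d2 e2
    by (simp, subst (asm) det_four_block_mat_lower_left_zero[of _ n _ m]) (use A B in auto)
  ultimately show ?thesis by simp
qed

lemma bij_eq_iff: "bij_betw h {0..<n::nat} S \<Longrightarrow> i < n \<Longrightarrow> j < n \<Longrightarrow> h i = h j \<longleftrightarrow> i = j"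
  by (rule inj_on_eq_iff[OF bij_betw_imp_inj_on]) auto

lemma det_on_sylvester:
  assumes S: "finite S" and R: "finite R"
  shows "det_on S (\<lambda>x y. (if x = y then 1 else 0) - (\<Sum>z\<in>R. A x z * B z y))
       = det_on R (\<lambda>x y. (if x = y then 1 else 0) - (\<Sum>z\<in>S. B x z * A z y))"
proof -
  obtain h where h: "bij_betw h {0..<card S} S" using ex_bij_betw_nat_finite[OF S] by blast
  obtain g where g: "bij_betw g {0..<card R} R" using ex_bij_betw_nat_finite[OF R] by blast
  let ?n = "card S" let ?m = "card R"
  let ?A = "mat ?n ?m (\<lambda>(i,j). A (h i) (g j))"
  let ?B = "mat ?m ?n (\<lambda>(i,j). B (g i) (h j))"
  have 1: "mat ?n ?n (\<lambda>(i,j). (if h i = h j then 1 else 0) - (\<Sum>z\<in>R. A (h i) z * B z (h j))) = 1\<^sub>m ?n - ?A * ?B"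
    by (rule eq_matI) (auto simp: scalar_prod_def sum_via[OF g] bij_eq_iff[OF h])
  have 2: "mat ?m ?m (\<lambda>(i,j). (if g i = g j then 1 else 0) - (\<Sum>z\<in>S. B (g i) z * A z (g j))) = 1\<^sub>m ?m - ?B * ?A"
    by (rule eq_matI) (auto simp: scalar_prod_def sum_via[OF h] bij_eq_iff[OF g])
  show ?thesis
    unfolding det_on_via[OF h] det_on_via[OF g]
    using 1 2 sylvester_mat[of ?A ?n ?m ?B] by simp
qed

lemma det_on_id: "finite S \<Longrightarrow> det_on S (\<lambda>x y. if x = y then 1 else 0) = 1"
proof -
  assume S: "finite S"
  obtain h where h: "bij_betw h {0..<card S} S" using ex_bij_betw_nat_finite[OF S] by blast
  have "mat (card S) (card S) (\<lambda>(i,j). if h i = h j then 1 else 0) = (1\<^sub>m (card S) :: complex mat)"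
    by (rule eq_matI) (auto simp: bij_eq_iff[OF h])
  thus ?thesis unfolding det_on_via[OF h] by simp
qed

lemma det_on_empty: "det_on {} M = 1"
  unfolding det_on_def by (simp add: permutes_empty)

lemma det_on_block:
  assumes S1: "finite S1" and S2: "finite S2" and dis: "S1 \<inter> S2 = {}"
    and z: "\<And>x y. x \<in> S1 \<Longrightarrow> y \<in> S2 \<Longrightarrow> M x y = 0"
  shows "det_on (S1 \<union> S2) M = det_on S1 M * det_on S2 M"
proof -
  obtain h1 where h1: "bij_betw h1 {0..<card S1} S1" using ex_bij_betw_nat_finite[OF S1] by blast
  obtain h2 where h2: "bij_betw h2 {0..<card S2} S2" using ex_bij_betw_nat_finite[OF S2] by blast
  let ?n1 = "card S1" let ?n2 = "card S2"
  define h where "h i = (if i < ?n1 then h1 i else h2 (i - ?n1))" for i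
  have b1: "bij_betw h {0..<?n1} S1"
    using h1 by (rule bij_betw_cong[THEN iffD1, rotated]) (auto simp: h_def)
  have sh: "bij_betw (\<lambda>i. i - ?n1) {?n1..<?n1+?n2} {0..<?n2}"
    by (rule bij_betw_byWitness[where f' = "\<lambda>i. i + ?n1"]) auto
  have b2: "bij_betw h {?n1..<?n1+?n2} S2"
    using bij_betw_trans[OF sh h2] by (rule bij_betw_cong[THEN iffD1, rotated]) (auto simp: h_def)
  have b: "bij_betw h {0..<?n1+?n2} (S1 \<union> S2)"
    using bij_betw_combine[OF b1 b2 dis] by (simp add: ivl_disj_un_two(3))
  let ?M1 = "mat ?n1 ?n1 (\<lambda>(i,j). M (h1 i) (h1 j))"
  let ?M2 = "mat ?n2 ?n2 (\<lambda>(i,j). M (h2 i) (h2 j))"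
  let ?M3 = "mat ?n2 ?n1 (\<lambda>(i,j). M (h2 i) (h1 j))"
  have eq: "mat (?n1+?n2) (?n1+?n2) (\<lambda>(i,j). M (h i) (h j)) = four_block_mat ?M1 (0\<^sub>m ?n1 ?n2) ?M3 ?M2"
    apply (rule eq_matI)
    using bij_betwE[OF h1] bij_betwE[OF h2] by (auto simp: h_def intro!: z)
  have "det_on (S1 \<union> S2) M = det ?M1 * det ?M2"
    unfolding det_on_via[OF b] eq
    by (rule det_four_block_mat_upper_right_zero) auto
  thus ?thesis unfolding det_on_via[OF h1] det_on_via[OF h2] .
qed

lemma det_on_blockdiag:
  assumes "finite I" "\<And>i. i \<in> I \<Longrightarrow> finite (B i)"
    "\<And>i j. i \<in> I \<Longrightarrow> j \<in> I \<Longrightarrow> i \<noteq> j \<Longrightarrow> B i \<inter> B j = {}"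
    "\<And>i j x y. i \<in> I \<Longrightarrow> j \<in> I \<Longrightarrow> i \<noteq> j \<Longrightarrow> x \<in> B i \<Longrightarrow> y \<in> B j \<Longrightarrow> M x y = 0"
  shows "det_on (\<Union>i\<in>I. B i) M = (\<Prod>i\<in>I. det_on (B i) M)"
  using assms
proof (induction I rule: finite_induct)
  case empty thus ?case by (simp add: det_on_empty)
next
  case (insert i I)
  have "det_on (\<Union>k\<in>insert i I. B k) M = det_on (B i \<union> (\<Union>k\<in>I. B k)) M" by simp
  also have "\<dots> = det_on (B i) M * det_on (\<Union>k\<in>I. B k) M"
    by (rule det_on_block) (use insert.prems insert.hyps in \<open>auto intro: insert.prems(3)\<close>)
  also have "det_on (\<Union>k\<in>I. B k) M = (\<Prod>k\<in>I. det_on (B k) M)"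
    by (rule insert.IH; meson insert.prems insertCI)
  finally show ?case using insert.hyps by simp
qed

lemma mult_entry:
  "A \<in> carrier_mat n k \<Longrightarrow> B \<in> carrier_mat k m \<Longrightarrow> a < n \<Longrightarrow> b < m \<Longrightarrow>
   (A * B) $$ (a, b) = (\<Sum>c<k. A $$ (a, c) * B $$ (c, b))"
  by (simp add: scalar_prod_def atLeast0LessThan)

lemma left_inv_of_invertible:
  fixes A :: "complex mat"
  assumes A: "A \<in> carrier_mat n n" and inv: "invertible_mat A"
  shows "the (mat_inverse A) * A = 1\<^sub>m n \<and> the (mat_inverse A) \<in> carrier_mat n n"
proof (cases "mat_inverse A")
  case None
  from inv obtain B where B: "A * B = 1\<^sub>m (dim_row A)" "B * A = 1\<^sub>m (dim_row B)"
    unfolding invertible_mat_def inverts_mat_def by blast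
  have Bc: "B \<in> carrier_mat n n"
  proof -
    have "dim_col B = n" using B(1) A by (metis carrier_matD(1) index_mult_mat(3) index_one_mat(3))
    moreover have "dim_row B = n" using B(2) A by (metis carrier_matD(2) index_mult_mat(3) index_one_mat(3))
    ultimately show ?thesis by auto
  qed
  have "A \<in> Units (ring_mat TYPE(complex) n (undefined::unit))"
    using A B Bc unfolding Units_def ring_mat_def by auto
  moreover have "A \<notin> Units (ring_mat TYPE(complex) n (undefined::unit))" by (rule mat_inverse(1)[OF A None])
  ultimately show ?thesis by blast
next
  case (Some B)
  from mat_inverse(2)[OF A Some] show ?thesis using Some by simp
qed


definition Jm :: "('v \<times> 'v \<Rightarrow> complex mat) \<Rightarrow> ('v \<times> 'v) \<times> nat \<Rightarrow> ('v \<times> 'v) \<times> nat \<Rightarrow> complex" where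
  "Jm u x y = (case x of (e, a) \<Rightarrow> case y of (e', b) \<Rightarrow> if e' = prod.swap e then u e $$ (a, b) else 0)"

definition Sm :: "('v \<times> 'v \<Rightarrow> complex mat) \<Rightarrow> ('v \<times> 'v) \<times> nat \<Rightarrow> 'v \<times> nat \<Rightarrow> complex" where
  "Sm u x y = (case x of (e, a) \<Rightarrow> case y of (j, b) \<Rightarrow> if j = fst e then u e $$ (a, b) else 0)"

definition Tm :: "'v \<times> nat \<Rightarrow> ('v \<times> 'v) \<times> nat \<Rightarrow> complex" where
  "Tm x y = (case x of (i, a) \<Rightarrow> case y of (e, b) \<Rightarrow> if snd e = i \<and> a = b then 1 else 0)"

definition Qm :: "('v \<Rightarrow> nat) \<Rightarrow> ('v \<times> 'v \<Rightarrow> complex mat) \<Rightarrow> ('v \<times> 'v) \<times> nat \<Rightarrow> ('v \<times> 'v) \<times> nat \<Rightarrow> complex" where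
  "Qm r u x y = (case x of (e, a) \<Rightarrow> case y of (e', b) \<Rightarrow>
     if e' = e then Winv r u e $$ (a, b) else if e' = prod.swap e then - (Winv r u e * u e) $$ (a, b) else 0)"

definition dl :: "'a \<Rightarrow> 'a \<Rightarrow> complex" where "dl x y = (if x = y then 1 else 0)"

lemma aux_stepA: "F \<Longrightarrow> (P \<Longrightarrow> Q) \<Longrightarrow> (d::complex) - (if F \<and> Q \<and> \<not> P then w else 0) = d + (if P then w else 0) - (if Q then w else 0)"
  by auto

locale setting =
  fixes V :: "'v set" and E :: "('v \<times> 'v) set" and r :: "'v \<Rightarrow> nat"
    and u :: "'v \<times> 'v \<Rightarrow> complex mat" and Or :: "('v \<times> 'v) set"
  assumes finV: "finite V"
    and EV: "E \<subseteq> V \<times> V"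
    and sym: "\<And>i j. (i, j) \<in> E \<Longrightarrow> (j, i) \<in> E"
    and noloop: "\<And>i. (i, i) \<notin> E"
    and rpos: "\<And>i. i \<in> V \<Longrightarrow> r i > 0"
    and uc: "\<And>e. e \<in> E \<Longrightarrow> u e \<in> carrier_mat (r (snd e)) (r (fst e))"
    and inv: "\<And>e. e \<in> E \<Longrightarrow> invertible_mat (1\<^sub>m (r (snd e)) - u e * u (prod.swap e))"
    and OrE: "Or \<subseteq> E"
    and Orsw: "\<And>e. e \<in> E \<Longrightarrow> (e \<in> Or \<longleftrightarrow> prod.swap e \<notin> Or)"
begin

abbreviation "EI \<equiv> edge_index E r"
abbreviation "VI \<equiv> vertex_index V r"

lemma finE: "finite E" using finV EV finite_subset by blast

lemma swE: "e \<in> E \<Longrightarrow> prod.swap e \<in> E" using sym by (cases e) auto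

lemma sw_neq: "e \<in> E \<Longrightarrow> prod.swap e \<noteq> e" using noloop by (cases e) auto

lemma fstV: "e \<in> E \<Longrightarrow> fst e \<in> V" using EV by auto
lemma sndV: "e \<in> E \<Longrightarrow> snd e \<in> V" using EV by auto

lemma usc: "e \<in> E \<Longrightarrow> u (prod.swap e) \<in> carrier_mat (r (fst e)) (r (snd e))"
  using uc[OF swE] by (cases e) auto

lemma Wprops: assumes e: "e \<in> E" shows "Winv r u e * (1\<^sub>m (r (snd e)) - u e * u (prod.swap e)) = 1\<^sub>m (r (snd e))
   \<and> Winv r u e \<in> carrier_mat (r (snd e)) (r (snd e))"
proof -
  have "1\<^sub>m (r (snd e)) - u e * u (prod.swap e) \<in> carrier_mat (r (snd e)) (r (snd e))"
    using mult_carrier_mat[OF uc[OF e] usc[OF e]] by (rule minus_carrier_mat)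
  thus ?thesis unfolding Winv_def by (rule left_inv_of_invertible[OF _ inv[OF e]])
qed

lemma Wc: "e \<in> E \<Longrightarrow> Winv r u e \<in> carrier_mat (r (snd e)) (r (snd e))" using Wprops by blast

lemma Wid: assumes e: "e \<in> E"
  shows "Winv r u e - Winv r u e * u e * u (prod.swap e) = 1\<^sub>m (r (snd e))"
proof -
  have W: "Winv r u e \<in> carrier_mat (r (snd e)) (r (snd e))" using Wc[OF e] .
  have "Winv r u e * (1\<^sub>m (r (snd e)) - u e * u (prod.swap e)) = Winv r u e * 1\<^sub>m (r (snd e)) - Winv r u e * (u e * u (prod.swap e))"
    by (rule mult_minus_distrib_mat[OF W]) (use uc[OF e] usc[OF e] in auto)
  also have "\<dots> = Winv r u e - Winv r u e * u e * u (prod.swap e)"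
    by (simp only: right_mult_one_mat[OF W] assoc_mult_mat[OF W uc[OF e] usc[OF e]])
  finally show ?thesis using Wprops[OF e] by simp
qed

lemma EI_Sigma: "EI = Sigma E (\<lambda>e. {..<r (snd e)})"
  unfolding edge_index_def by auto

lemma VI_Sigma: "VI = Sigma V (\<lambda>i. {..<r i})"
  unfolding vertex_index_def by auto

lemma finEI: "finite EI" unfolding EI_Sigma using finE by auto
lemma finVI: "finite VI" unfolding VI_Sigma using finV by auto

lemma sum_EI: "(\<Sum>z\<in>EI. f z) = (\<Sum>e\<in>E. \<Sum>c<r (snd e). f (e, c))"
  unfolding EI_Sigma by (subst sum.Sigma) (use finE in auto)

lemma sum_VI: "(\<Sum>z\<in>VI. f z) = (\<Sum>i\<in>V. \<Sum>c<r i. f (i, c))"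
  unfolding VI_Sigma by (subst sum.Sigma) (use finV in auto)

lemma stepA:
  assumes x: "x \<in> EI" and y: "y \<in> EI"
  shows "dl x y - edge_op E u x y = (dl x y + Jm u x y) - (\<Sum>z\<in>VI. Sm u x z * Tm z y)"
proof -
  obtain e a where xe: "x = (e, a)" "e \<in> E" "a < r (snd e)" using x unfolding edge_index_def by auto
  obtain e' b where ye: "y = (e', b)" "e' \<in> E" "b < r (snd e')" using y unfolding edge_index_def by auto
  have "(\<Sum>z\<in>VI. Sm u x z * Tm z y) = (\<Sum>z\<in>VI. if z = (fst e, b) then (if snd e' = fst e then u e $$ (a, b) else 0) else 0)"
    by (rule sum.cong) (auto simp: xe ye Sm_def Tm_def split: if_splits)
  also have "\<dots> = (if snd e' = fst e then u e $$ (a, b) else 0)"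
    using ye fstV[OF xe(2)] by (subst sum.delta[OF finVI]) (auto simp: vertex_index_def)
  finally have sm: "(\<Sum>z\<in>VI. Sm u x z * Tm z y) = (if snd e' = fst e then u e $$ (a, b) else 0)" .
  have eo: "edge_op E u x y = (if e' \<in> E \<and> snd e' = fst e \<and> \<not> e' = prod.swap e then u e $$ (a,b) else 0)"
    unfolding edge_op_def xe(1) ye(1) by simp
  have jm: "Jm u x y = (if e' = prod.swap e then u e $$ (a,b) else 0)"
    unfolding Jm_def xe(1) ye(1) by simp
  have sw: "e' = prod.swap e \<Longrightarrow> snd e' = fst e" by (metis snd_swap)
  show ?thesis unfolding sm eo jm
    by (rule aux_stepA[OF ye(2) sw])
qed


lemma swap_iff: "a = prod.swap b \<longleftrightarrow> b = prod.swap a"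
  by (cases a; cases b) auto

lemma EI_mem: "x \<in> EI \<Longrightarrow> (\<And>e a. x = (e, a) \<Longrightarrow> e \<in> E \<Longrightarrow> a < r (snd e) \<Longrightarrow> thesis) \<Longrightarrow> thesis"
  unfolding edge_index_def by auto

lemma VI_mem: "x \<in> VI \<Longrightarrow> (\<And>i a. x = (i, a) \<Longrightarrow> i \<in> V \<Longrightarrow> a < r i \<Longrightarrow> thesis) \<Longrightarrow> thesis"
  unfolding vertex_index_def by auto

lemma sumJ:
  assumes y: "y = (e', b)" "e' \<in> E"
  shows "(\<Sum>z\<in>EI. F z * Jm u z y) = (\<Sum>c<r (fst e'). F (prod.swap e', c) * u (prod.swap e') $$ (c, b))"
proof -
  have "(\<Sum>z\<in>EI. F z * Jm u z y) = (\<Sum>e''\<in>E. \<Sum>c<r (snd e''). F (e'', c) * Jm u (e'', c) y)"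
    by (rule sum_EI)
  also have "\<dots> = (\<Sum>e''\<in>E. if e'' = prod.swap e' then (\<Sum>c<r (snd e''). F (e'', c) * u e'' $$ (c, b)) else 0)"
    by (rule sum.cong[OF refl]) (auto simp: Jm_def y(1) swap_iff[of e'])
  also have "\<dots> = (\<Sum>c<r (snd (prod.swap e')). F (prod.swap e', c) * u (prod.swap e') $$ (c, b))"
    by (subst sum.delta[OF finE]) (use swE[OF y(2)] in auto)
  finally show ?thesis by simp
qed

lemma sum_dl: "y \<in> S \<Longrightarrow> finite S \<Longrightarrow> (\<Sum>z\<in>S. F z * dl z y) = F y"
  by (simp add: dl_def if_distrib[of "\<lambda>t. _ * t"] cong: if_cong) 

lemma QJ:
  assumes x: "x = (e, a)" "e \<in> E" "a < r (snd e)" and y: "y = (e', b)" "e' \<in> E" "b < r (snd e')"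
  shows "(\<Sum>z\<in>EI. Qm r u x z * Jm u z y) =
    (if e' = prod.swap e then (Winv r u e * u e) $$ (a, b)
     else if e' = e then - (Winv r u e * u e * u (prod.swap e)) $$ (a, b) else 0)"
proof -
  have W: "Winv r u e \<in> carrier_mat (r (snd e)) (r (snd e))" using Wc[OF x(2)] .
  have U: "u e \<in> carrier_mat (r (snd e)) (r (fst e))" using uc[OF x(2)] .
  have U': "u (prod.swap e) \<in> carrier_mat (r (fst e)) (r (snd e))" using usc[OF x(2)] .
  have ne: "prod.swap e \<noteq> e" using sw_neq[OF x(2)] .
  have s: "(\<Sum>z\<in>EI. Qm r u x z * Jm u z y) = (\<Sum>c<r (fst e'). Qm r u x (prod.swap e', c) * u (prod.swap e') $$ (c, b))"
    by (rule sumJ[OF y(1,2)])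
  show ?thesis
  proof (cases "e' = prod.swap e")
    case True
    hence se: "prod.swap e' = e" by simp
    have fe: "fst e' = snd e" using True by simp
    have b: "b < r (fst e)" using y(3) True by simp
    have "(\<Sum>c<r (fst e'). Qm r u x (prod.swap e', c) * u (prod.swap e') $$ (c, b))
        = (\<Sum>c<r (snd e). Winv r u e $$ (a, c) * u e $$ (c, b))"
      unfolding se fe by (simp add: Qm_def x(1))
    also have "\<dots> = (Winv r u e * u e) $$ (a, b)"
      by (rule mult_entry[OF W U x(3) b, symmetric])
    finally have c1: "(\<Sum>c<r (fst e'). Qm r u x (prod.swap e', c) * u (prod.swap e') $$ (c, b)) = (Winv r u e * u e) $$ (a, b)" .
    show ?thesis using s c1 True by (intro trans[OF s] trans[OF c1] if_P[symmetric])
  next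
    case F: False
    show ?thesis
    proof (cases "e' = e")
      case True
      have b: "b < r (snd e)" using y(3) True by simp
      have "(\<Sum>c<r (fst e'). Qm r u x (prod.swap e', c) * u (prod.swap e') $$ (c, b))
          = (\<Sum>c<r (fst e). - ((Winv r u e * u e) $$ (a, c) * u (prod.swap e) $$ (c, b)))"
        unfolding True using ne by (simp add: Qm_def x(1))
      also have "\<dots> = - ((Winv r u e * u e * u (prod.swap e)) $$ (a, b))"
        by (subst mult_entry[OF mult_carrier_mat[OF W U] U' x(3) b]) (simp add: sum_negf)
      finally have c2: "(\<Sum>c<r (fst e'). Qm r u x (prod.swap e', c) * u (prod.swap e') $$ (c, b)) = - ((Winv r u e * u e * u (prod.swap e)) $$ (a, b))" .
      have i1: "(if e' = prod.swap e then (Winv r u e * u e) $$ (a, b)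
     else if e' = e then - (Winv r u e * u e * u (prod.swap e)) $$ (a, b) else 0) = - (Winv r u e * u e * u (prod.swap e)) $$ (a, b)"
        using F True by (intro trans[OF if_not_P] if_P)
      show ?thesis unfolding i1 using s c2 by (rule trans)
    next
      case False
      have "prod.swap e' \<noteq> e" "prod.swap e' \<noteq> prod.swap e" using F False by (metis swap_swap)+
      hence "Qm r u x (prod.swap e', c) = 0" for c by (simp add: Qm_def x(1))
      hence c3: "(\<Sum>c<r (fst e'). Qm r u x (prod.swap e', c) * u (prod.swap e') $$ (c, b)) = 0" by simp
      have i1: "(if e' = prod.swap e then (Winv r u e * u e) $$ (a, b)
     else if e' = e then - (Winv r u e * u e * u (prod.swap e)) $$ (a, b) else 0) = 0"
        using F False by (intro trans[OF if_not_P] if_not_P)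
      show ?thesis unfolding i1 using s c3 by (rule trans)
    qed
  qed
qed

definition "Pm = (\<lambda>x y. dl x y + Jm u x y)"

lemma stepB:
  assumes x: "x \<in> EI" and y: "y \<in> EI"
  shows "(\<Sum>z\<in>EI. Qm r u x z * Pm z y) = dl x y"
proof -
  obtain e a where xe: "x = (e, a)" "e \<in> E" "a < r (snd e)" using x by (rule EI_mem)
  obtain e' b where ye: "y = (e', b)" "e' \<in> E" "b < r (snd e')" using y by (rule EI_mem)
  have "(\<Sum>z\<in>EI. Qm r u x z * Pm z y) = (\<Sum>z\<in>EI. Qm r u x z * dl z y) + (\<Sum>z\<in>EI. Qm r u x z * Jm u z y)"
    by (simp add: Pm_def distrib_left sum.distrib)
  also have "(\<Sum>z\<in>EI. Qm r u x z * dl z y) = Qm r u x y" by (rule sum_dl[OF y finEI])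
  also note QJ[OF xe ye]
  finally have eq: "(\<Sum>z\<in>EI. Qm r u x z * Pm z y) = Qm r u x y + (if e' = prod.swap e then (Winv r u e * u e) $$ (a, b)
     else if e' = e then - (Winv r u e * u e * u (prod.swap e)) $$ (a, b) else 0)" .
  have ne: "prod.swap e \<noteq> e" using sw_neq[OF xe(2)] .
  show ?thesis
  proof (cases "e' = prod.swap e")
    case True
    thus ?thesis unfolding eq using ne by (auto simp: Qm_def xe(1) ye(1) dl_def)
  next
    case F: False
    show ?thesis
    proof (cases "e' = e")
      case True
      have b: "b < r (snd e)" using ye(3) True by simp
      have "(Winv r u e - Winv r u e * u e * u (prod.swap e)) $$ (a, b) = 1\<^sub>m (r (snd e)) $$ (a, b)"
        using Wid[OF xe(2)] by simp
      hence "Winv r u e $$ (a, b) - (Winv r u e * u e * u (prod.swap e)) $$ (a, b) = (if a = b then 1 else 0)"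
        using xe(3) b Wc[OF xe(2)] uc[OF xe(2)] usc[OF xe(2)] by simp
      thus ?thesis unfolding eq using True ne by (simp add: Qm_def xe(1) ye(1) dl_def)
    next
      case False
      thus ?thesis unfolding eq using F by (auto simp: Qm_def xe(1) ye(1) dl_def)
    qed
  qed
qed


lemma sum_two:
  assumes "finite A" "a \<in> A" "b \<in> A" "a \<noteq> b" "\<And>x. x \<in> A \<Longrightarrow> x \<noteq> a \<Longrightarrow> x \<noteq> b \<Longrightarrow> G x = 0"
  shows "sum G A = G a + G b"
proof -
  have "sum G {a, b} = sum G A"
    by (rule sum.mono_neutral_left) (use assms in auto)
  thus ?thesis using assms(4) by simp
qed

definition "QS = (\<lambda>x y. \<Sum>z\<in>EI. Qm r u x z * Sm u z y)"

lemma QS_eq: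
  assumes x: "e \<in> E" "c < r (snd e)" and y: "j \<in> V" "b < r j"
  shows "QS (e, c) (j, b) = (if j = fst e then (Winv r u e * u e) $$ (c, b) else 0)
      - (if j = snd e then (Winv r u e * u e * u (prod.swap e)) $$ (c, b) else 0)"
proof -
  have W: "Winv r u e \<in> carrier_mat (r (snd e)) (r (snd e))" using Wc[OF x(1)] .
  have U: "u e \<in> carrier_mat (r (snd e)) (r (fst e))" using uc[OF x(1)] .
  have U': "u (prod.swap e) \<in> carrier_mat (r (fst e)) (r (snd e))" using usc[OF x(1)] .
  have ne: "prod.swap e \<noteq> e" using sw_neq[OF x(1)] .
  define G where "G e'' = (\<Sum>d<r (snd e''). Qm r u (e, c) (e'', d) * Sm u (e'', d) (j, b))" for e''
  have "QS (e, c) (j, b) = sum G E" unfolding QS_def G_def by (rule sum_EI)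
  also have "\<dots> = G e + G (prod.swap e)"
  proof (rule sum_two[OF finE x(1) swE[OF x(1)] ne[symmetric]])
    fix e'' assume "e'' \<noteq> e" "e'' \<noteq> prod.swap e"
    thus "G e'' = 0" unfolding G_def Qm_def by simp
  qed
  also have "G e = (if j = fst e then (Winv r u e * u e) $$ (c, b) else 0)"
  proof (cases "j = fst e")
    case True
    have b: "b < r (fst e)" using y(2) True by simp
    have "G e = (\<Sum>d<r (snd e). Winv r u e $$ (c, d) * u e $$ (d, b))"
      unfolding G_def Qm_def Sm_def using True by simp
    also have "\<dots> = (Winv r u e * u e) $$ (c, b)" by (rule mult_entry[OF W U x(2) b, symmetric])
    finally show ?thesis using True by simp
  next
    case False thus ?thesis unfolding G_def Qm_def Sm_def by simp
  qed
  also have "G (prod.swap e) = - (if j = snd e then (Winv r u e * u e * u (prod.swap e)) $$ (c, b) else 0)"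
  proof (cases "j = snd e")
    case True
    have b: "b < r (snd e)" using y(2) True by simp
    have "G (prod.swap e) = (\<Sum>d<r (fst e). - ((Winv r u e * u e) $$ (c, d) * u (prod.swap e) $$ (d, b)))"
      unfolding G_def Qm_def Sm_def using True ne by simp
    also have "\<dots> = - (Winv r u e * u e * u (prod.swap e)) $$ (c, b)"
      by (subst mult_entry[OF mult_carrier_mat[OF W U] U' x(2) b]) (simp add: sum_negf)
    finally show ?thesis using True by simp
  next
    case False thus ?thesis unfolding G_def Qm_def Sm_def using ne by simp
  qed
  finally show ?thesis by simp
qed

lemma stepD:
  assumes x: "x = (i, a)" "i \<in> V" "a < r i" and y: "y = (j, b)" "j \<in> V" "b < r j"
  shows "(\<Sum>z\<in>EI. Tm x z * QS z y) = hatA E r u x y - hatD E r u x y"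
proof -
  have "(\<Sum>z\<in>EI. Tm x z * QS z y) = (\<Sum>e\<in>E. \<Sum>c<r (snd e). Tm x (e, c) * QS (e, c) y)"
    by (rule sum_EI)
  also have "\<dots> = (\<Sum>e\<in>E. if snd e = i then QS (e, a) y else 0)"
  proof (rule sum.cong[OF refl])
    fix e assume e: "e \<in> E"
    show "(\<Sum>c<r (snd e). Tm x (e, c) * QS (e, c) y) = (if snd e = i then QS (e, a) y else 0)"
    proof (cases "snd e = i")
      case True
      have "(\<Sum>c<r (snd e). Tm x (e, c) * QS (e, c) y) = (\<Sum>c<r (snd e). if a = c then QS (e, c) y else 0)"
        by (rule sum.cong[OF refl]) (simp add: Tm_def x(1) True)
      also have "\<dots> = QS (e, a) y" using True x(3) by (subst sum.delta') auto
      finally show ?thesis using True by simp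
    next
      case False thus ?thesis by (simp add: Tm_def x(1))
    qed
  qed
  also have "\<dots> = (\<Sum>e\<in>E. if snd e = i \<and> fst e = j then (Winv r u e * u e) $$ (a, b) else 0)
     - (\<Sum>e\<in>E. if snd e = i \<and> i = j then (Winv r u e * u e * u (prod.swap e)) $$ (a, b) else 0)"
    unfolding sum_subtractf[symmetric]
  proof (rule sum.cong[OF refl])
    fix e assume e: "e \<in> E"
    show "(if snd e = i then QS (e, a) y else 0) =
      (if snd e = i \<and> fst e = j then (Winv r u e * u e) $$ (a, b) else 0) -
      (if snd e = i \<and> i = j then (Winv r u e * u e * u (prod.swap e)) $$ (a, b) else 0)"
    proof (cases "snd e = i")
      case True
      have a: "a < r (snd e)" using True x(3) by simp
      show ?thesis unfolding y(1) QS_eq[OF e a y(2,3)] using True by auto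
    qed simp
  qed
  also have "(\<Sum>e\<in>E. if snd e = i \<and> fst e = j then (Winv r u e * u e) $$ (a, b) else 0) = hatA E r u x y"
    unfolding hatA_def x(1) y(1) by (simp add: sum.inter_filter[OF finE])
  also have "(\<Sum>e\<in>E. if snd e = i \<and> i = j then (Winv r u e * u e * u (prod.swap e)) $$ (a, b) else 0) = hatD E r u x y"
    unfolding hatD_def x(1) y(1) by (simp add: sum.inter_filter[OF finE])
  finally show ?thesis .
qed

lemma comp_alg:
  fixes Q :: "'a \<Rightarrow> 'b \<Rightarrow> complex"
  shows "(\<Sum>z\<in>S. Q x z * (P z y - (\<Sum>w\<in>R. S' z w * T w y))) = (\<Sum>z\<in>S. Q x z * P z y) - (\<Sum>w\<in>R. (\<Sum>z\<in>S. Q x z * S' z w) * T w y)"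
proof -
  have "(\<Sum>z\<in>S. Q x z * (\<Sum>w\<in>R. S' z w * T w y)) = (\<Sum>w\<in>R. (\<Sum>z\<in>S. Q x z * S' z w) * T w y)"
    by (simp add: sum_distrib_left sum_distrib_right mult.assoc) (rule sum.swap)
  thus ?thesis by (simp add: right_diff_distrib sum_subtractf)
qed


definition "Rm = (\<lambda>x y. dl x y - (if fst x \<in> Or then Jm u x y else 0))"
definition "RP = (\<lambda>x y. \<Sum>z\<in>EI. Rm x z * Pm z y)"

lemma JJ:
  assumes x: "x = (e, a)" "e \<in> E" "a < r (snd e)" and y: "y = (e', b)" "e' \<in> E" "b < r (snd e')"
  shows "(\<Sum>z\<in>EI. Jm u x z * Jm u z y) = (if e' = e then (u e * u (prod.swap e)) $$ (a, b) else 0)"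
proof (cases "e' = e")
  case True
  have b: "b < r (snd e)" using y(3) True by simp
  have "(\<Sum>z\<in>EI. Jm u x z * Jm u z y) = (\<Sum>c<r (fst e). u e $$ (a, c) * u (prod.swap e) $$ (c, b))"
    unfolding sumJ[OF y(1,2)] True by (simp add: Jm_def x(1))
  also have "\<dots> = (u e * u (prod.swap e)) $$ (a, b)"
    by (rule mult_entry[OF uc[OF x(2)] usc[OF x(2)] x(3) b, symmetric])
  finally show ?thesis using True by simp
next
  case False
  have "prod.swap e' \<noteq> prod.swap e" using False by (metis swap_swap)
  hence "(\<Sum>z\<in>EI. Jm u x z * Jm u z y) = 0"
    unfolding sumJ[OF y(1,2)] by (simp add: Jm_def x(1))
  thus ?thesis using False by simp
qed

lemma RP_eq:
  assumes x: "x = (e, a)" "e \<in> E" "a < r (snd e)" and y: "y = (e', b)" "e' \<in> E" "b < r (snd e')"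
  shows "RP x y = (if e \<in> Or then dl x y - (if e' = e then (u e * u (prod.swap e)) $$ (a, b) else 0)
                   else dl x y + Jm u x y)"
proof -
  have yEI: "y \<in> EI" using y unfolding edge_index_def by auto
  have "RP x y = (\<Sum>z\<in>EI. dl x z * Pm z y) - (\<Sum>z\<in>EI. (if fst x \<in> Or then Jm u x z else 0) * Pm z y)"
    unfolding RP_def Rm_def by (simp add: left_diff_distrib sum_subtractf)
  also have "(\<Sum>z\<in>EI. dl x z * Pm z y) = Pm x y"
  proof -
    have "(\<Sum>z\<in>EI. dl x z * Pm z y) = (\<Sum>z\<in>EI. if x = z then Pm z y else 0)"
      by (rule sum.cong[OF refl]) (simp add: dl_def)
    also have "\<dots> = Pm x y" by (subst sum.delta'[OF finEI]) (use x in \<open>auto simp: edge_index_def\<close>)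
    finally show ?thesis .
  qed
  also have "(\<Sum>z\<in>EI. (if fst x \<in> Or then Jm u x z else 0) * Pm z y)
     = (if e \<in> Or then Jm u x y + (if e' = e then (u e * u (prod.swap e)) $$ (a, b) else 0) else 0)"
  proof (cases "e \<in> Or")
    case True
    have "(\<Sum>z\<in>EI. (if fst x \<in> Or then Jm u x z else 0) * Pm z y) = (\<Sum>z\<in>EI. Jm u x z * dl z y) + (\<Sum>z\<in>EI. Jm u x z * Jm u z y)"
      using True by (simp add: x(1) Pm_def distrib_left sum.distrib)
    also have "(\<Sum>z\<in>EI. Jm u x z * dl z y) = Jm u x y" by (rule sum_dl[OF yEI finEI])
    also note JJ[OF x y]
    finally show ?thesis using True by simp
  next
    case False thus ?thesis by (simp add: x(1))
  qed
  finally show ?thesis unfolding Pm_def by simp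
qed

definition "EO = {x \<in> EI. fst x \<in> Or}"
definition "EN = {x \<in> EI. fst x \<notin> Or}"

lemma EI_split: "EI = EO \<union> EN" "EO \<inter> EN = {}" "finite EO" "finite EN"
  unfolding EO_def EN_def using finEI by auto

lemma det_R: "det_on EI Rm = 1"
proof -
  have "det_on EI Rm = det_on (EN \<union> EO) Rm" using EI_split by (simp add: Un_commute)
  also have "\<dots> = det_on EN Rm * det_on EO Rm"
  proof (rule det_on_block)
    fix x y assume "x \<in> EN" "y \<in> EO"
    thus "Rm x y = 0" unfolding EN_def EO_def Rm_def dl_def by auto
  qed (use EI_split in auto)
  also have "det_on EN Rm = 1"
  proof -
    have "det_on EN Rm = det_on EN (\<lambda>x y. if x = y then 1 else 0)"
      by (rule det_on_cong) (auto simp: EN_def Rm_def dl_def)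
    thus ?thesis using det_on_id[OF EI_split(4)] by simp
  qed
  also have "det_on EO Rm = 1"
  proof -
    have "det_on EO Rm = det_on EO (\<lambda>x y. if x = y then 1 else 0)"
    proof (rule det_on_cong)
      fix x y assume x: "x \<in> EO" and y: "y \<in> EO"
      obtain e a where xe: "x = (e, a)" "e \<in> E" "a < r (snd e)" "e \<in> Or"
        using x unfolding EO_def edge_index_def by auto
      obtain e' b where ye: "y = (e', b)" "e' \<in> E" "e' \<in> Or"
        using y unfolding EO_def edge_index_def by auto
      have "e' \<noteq> prod.swap e" using Orsw[OF xe(2)] xe(4) ye(3) by blast
      thus "Rm x y = (if x = y then 1 else 0)" unfolding Rm_def dl_def Jm_def xe(1) ye(1) by simp
    qed
    thus ?thesis using det_on_id[OF EI_split(3)] by simp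
  qed
  finally show ?thesis by simp
qed

lemma det_RP: "det_on EI RP = (\<Prod>e\<in>Or. det (1\<^sub>m (r (snd e)) - u e * u (prod.swap e)))"
proof -
  define Bk where "Bk e = (\<lambda>a. (e, a)) ` {0..<r (snd e)}" for e :: "'v \<times> 'v"
  have EO_U: "EO = (\<Union>e\<in>Or. Bk e)" unfolding EO_def Bk_def edge_index_def using OrE by auto
  have finOr: "finite Or" using OrE finE finite_subset by blast
  have "det_on EI RP = det_on EO RP * det_on EN RP"
    unfolding EI_split(1)
  proof (rule det_on_block)
    fix x y assume x: "x \<in> EO" and y: "y \<in> EN"
    obtain e a where xe: "x = (e, a)" "e \<in> E" "a < r (snd e)" "e \<in> Or"
      using x unfolding EO_def edge_index_def by auto
    obtain e' b where ye: "y = (e', b)" "e' \<in> E" "b < r (snd e')" "e' \<notin> Or"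
      using y unfolding EN_def edge_index_def by auto
    have "e' \<noteq> e" using xe(4) ye(4) by blast
    thus "RP x y = 0" unfolding RP_eq[OF xe(1-3) ye(1-3)] using xe(4) by (simp add: dl_def xe(1) ye(1))
  qed (use EI_split in auto)
  also have "det_on EN RP = 1"
  proof -
    have "det_on EN RP = det_on EN (\<lambda>x y. if x = y then 1 else 0)"
    proof (rule det_on_cong)
      fix x y assume x: "x \<in> EN" and y: "y \<in> EN"
      obtain e a where xe: "x = (e, a)" "e \<in> E" "a < r (snd e)" "e \<notin> Or"
        using x unfolding EN_def edge_index_def by auto
      obtain e' b where ye: "y = (e', b)" "e' \<in> E" "b < r (snd e')" "e' \<notin> Or"
        using y unfolding EN_def edge_index_def by auto
      have "e' \<noteq> prod.swap e" using Orsw[OF xe(2)] xe(4) ye(4) by blast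
      thus "RP x y = (if x = y then 1 else 0)"
        unfolding RP_eq[OF xe(1-3) ye(1-3)] using xe(4) by (simp add: dl_def Jm_def xe(1) ye(1))
    qed
    thus ?thesis using det_on_id[OF EI_split(4)] by simp
  qed
  also have "det_on EO RP = (\<Prod>e\<in>Or. det_on (Bk e) RP)"
    unfolding EO_U
  proof (rule det_on_blockdiag[OF finOr])
    fix e e' x y assume a: "e \<in> Or" "e' \<in> Or" "e \<noteq> e'" "x \<in> Bk e" "y \<in> Bk e'"
    then obtain c d where cd: "x = (e, c)" "c < r (snd e)" "y = (e', d)" "d < r (snd e')" unfolding Bk_def by auto
    have E: "e \<in> E" "e' \<in> E" using a OrE by auto
    show "RP x y = 0" unfolding RP_eq[OF cd(1) E(1) cd(2) cd(3) E(2) cd(4)] using a(1,3)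
      by (simp add: dl_def cd(1,3))
  qed (auto simp: Bk_def)
  also have "\<dots> = (\<Prod>e\<in>Or. det (1\<^sub>m (r (snd e)) - u e * u (prod.swap e)))"
  proof (rule prod.cong[OF refl])
    fix e assume eO: "e \<in> Or"
    have e: "e \<in> E" using eO OrE by auto
    have h: "bij_betw (\<lambda>a. (e, a)) {0..<r (snd e)} (Bk e)"
      unfolding Bk_def by (rule bij_betw_imageI) (auto simp: inj_on_def)
    have "mat (r (snd e)) (r (snd e)) (\<lambda>(a, b). RP (e, a) (e, b)) = 1\<^sub>m (r (snd e)) - u e * u (prod.swap e)"
      by (rule eq_matI) (use e eO uc[OF e] usc[OF e] in \<open>auto simp: RP_eq dl_def\<close>)
    thus "det_on (Bk e) RP = det (1\<^sub>m (r (snd e)) - u e * u (prod.swap e))"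
      unfolding det_on_via[OF h] by simp
  qed
  finally show ?thesis by simp
qed

lemma det_P: "det_on EI Pm = (\<Prod>e\<in>Or. det (1\<^sub>m (r (snd e)) - u e * u (prod.swap e)))"
  using det_on_mult[OF finEI, of Rm Pm] det_R det_RP unfolding RP_def by simp

end

theorem corollary1:
  fixes V :: "'v set" and E :: "('v \<times> 'v) set" and r :: "'v \<Rightarrow> nat"
    and u :: "'v \<times> 'v \<Rightarrow> complex mat" and Or :: "('v \<times> 'v) set"
  assumes "finite V"
    and "E \<subseteq> V \<times> V"
    and "\<And>i j. (i, j) \<in> E \<Longrightarrow> (j, i) \<in> E"
    and "\<And>i. (i, i) \<notin> E"
    and "\<And>i. i \<in> V \<Longrightarrow> r i > 0"
    and "\<And>e. e \<in> E \<Longrightarrow> u e \<in> carrier_mat (r (snd e)) (r (fst e))"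
    and "\<And>e. e \<in> E \<Longrightarrow> invertible_mat (1\<^sub>m (r (snd e)) - u e * u (prod.swap e))"
    and "Or \<subseteq> E"
    and "\<And>e. e \<in> E \<Longrightarrow> (e \<in> Or \<longleftrightarrow> prod.swap e \<notin> Or)"
  shows "zeta_inv E r u =
     det_on (vertex_index V r) (\<lambda>x y. (if x = y then 1 else 0) + hatD E r u x y - hatA E r u x y)
     * (\<Prod>e\<in>Or. det (1\<^sub>m (r (snd e)) - u e * u (prod.swap e)))"
proof -
  interpret setting V E r u Or using assms by unfold_locales auto
  let ?ST = "\<lambda>x y. \<Sum>z\<in>VI. Sm u x z * Tm z y"
  let ?Q = "Qm r u"
  have 1: "zeta_inv E r u = det_on EI (\<lambda>x y. Pm x y - ?ST x y)"
    unfolding zeta_inv_def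
  proof (rule det_on_cong)
    fix x y assume "x \<in> EI" "y \<in> EI"
    from stepA[OF this] show "(if x = y then 1 else 0) - edge_op E u x y = Pm x y - ?ST x y"
      unfolding Pm_def dl_def .
  qed
  have 2: "det_on EI ?Q * det_on EI Pm = 1"
  proof -
    have "det_on EI ?Q * det_on EI Pm = det_on EI (\<lambda>x y. \<Sum>z\<in>EI. ?Q x z * Pm z y)"
      by (rule det_on_mult[OF finEI, symmetric])
    also have "\<dots> = det_on EI (\<lambda>x y. if x = y then 1 else 0)"
      by (rule det_on_cong) (simp add: stepB dl_def)
    also have "\<dots> = 1" by (rule det_on_id[OF finEI])
    finally show ?thesis .
  qed
  have 3: "det_on EI ?Q * det_on EI (\<lambda>x y. Pm x y - ?ST x y)
      = det_on EI (\<lambda>x y. (if x = y then 1 else 0) - (\<Sum>w\<in>VI. QS x w * Tm w y))"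
  proof -
    have "det_on EI ?Q * det_on EI (\<lambda>x y. Pm x y - ?ST x y) = det_on EI (\<lambda>x y. \<Sum>z\<in>EI. ?Q x z * (Pm z y - ?ST z y))"
      by (rule det_on_mult[OF finEI, symmetric])
    also have "\<dots> = det_on EI (\<lambda>x y. (if x = y then 1 else 0) - (\<Sum>w\<in>VI. QS x w * Tm w y))"
    proof (rule det_on_cong)
      fix x y assume x: "x \<in> EI" and y: "y \<in> EI"
      show "(\<Sum>z\<in>EI. ?Q x z * (Pm z y - ?ST z y)) = (if x = y then 1 else 0) - (\<Sum>w\<in>VI. QS x w * Tm w y)"
        unfolding comp_alg stepB[OF x y] QS_def dl_def ..
    qed
    finally show ?thesis .
  qed
  have 4: "det_on EI (\<lambda>x y. (if x = y then 1 else 0) - (\<Sum>w\<in>VI. QS x w * Tm w y))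
      = det_on VI (\<lambda>x y. (if x = y then 1 else 0) - (\<Sum>z\<in>EI. Tm x z * QS z y))"
    by (rule det_on_sylvester[OF finEI finVI])
  have 5: "det_on VI (\<lambda>x y. (if x = y then 1 else 0) - (\<Sum>z\<in>EI. Tm x z * QS z y))
      = det_on VI (\<lambda>x y. (if x = y then 1 else 0) + hatD E r u x y - hatA E r u x y)"
  proof (rule det_on_cong)
    fix x y assume x: "x \<in> VI" and y: "y \<in> VI"
    obtain i a where xi: "x = (i, a)" "i \<in> V" "a < r i" using x by (rule VI_mem)
    obtain j b where yj: "y = (j, b)" "j \<in> V" "b < r j" using y by (rule VI_mem)
    show "(if x = y then 1 else 0) - (\<Sum>z\<in>EI. Tm x z * QS z y) = (if x = y then 1 else 0) + hatD E r u x y - hatA E r u x y"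
      unfolding stepD[OF xi yj] by simp
  qed
  define D where "D = det_on EI (\<lambda>x y. Pm x y - ?ST x y)"
  define X where "X = det_on VI (\<lambda>x y. (if x = y then 1 else 0) + hatD E r u x y - hatA E r u x y)"
  have qD: "det_on EI ?Q * D = X" unfolding D_def X_def using 3 4 5 by simp
  have "D = (det_on EI ?Q * det_on EI Pm) * D" using 2 by simp
  also have "\<dots> = det_on EI Pm * (det_on EI ?Q * D)" by (simp add: ac_simps)
  also have "\<dots> = X * det_on EI Pm" using qD by simp
  finally show ?thesis unfolding 1 D_def[symmetric] X_def[symmetric] det_P .
qed

end
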